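(* For each $n\geq1$ let $\mathcal P_n$ be a polytope in $\mathbb R^k$ with $\mathcal P_{n+1}\subseteq\mathcal P_n$ for all $n$. Let $\mathcal P:=\bigcap_n\mathcal P_n$ and let $p$ be an extreme point of $\mathcal P$. Then for each $n$ there exists a vertex $p_n$ of $\mathcal P_n$ such that $\lim_{n\to\infty}p_n=p$.
   Context: A polytope is the convex hull of finitely many points of $\mathbb R^k$; its vertices are its extreme points. *)

theory Defs
  imports "HOL-Analysis.Analysis"
begin

end

theory Submission
  imports Defs
begin

lemma chain_sub:
  assumes "\<And>n. n \<ge> 1 \<Longrightarrow> P (Suc n) \<subseteq> P n" "1 \<le> m" "m \<le> n"
  shows "P n \<subseteq> P m"
  using assms(3)
proof (induction n rule: dec_induct)
  case base then show ?case by simp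
next
  case (step k) then show ?case using assms(1)[of k] assms(2) by auto
qed

lemma exists_min_dist:
  fixes E :: "'a::metric_space set"
  assumes "finite E" "E \<noteq> {}"
  shows "\<exists>v\<in>E. \<forall>w\<in>E. dist v p \<le> dist w p"
  using assms
proof (induction E rule: finite_ne_induct)
  case (singleton x) then show ?case by simp
next
  case (insert x F)
  then obtain v where v: "v \<in> F" "\<forall>w\<in>F. dist v p \<le> dist w p" by blast
  show ?case
  proof (cases "dist x p \<le> dist v p")
    case True then show ?thesis using v by force
  next
    case False then show ?thesis using v by force
  qed
qed

lemma key:
  fixes P :: "nat \<Rightarrow> 'a::euclidean_space set" and p :: 'a
  assumes pol: "\<And>n. n \<ge> 1 \<Longrightarrow> polytope (P n)"
    and dec: "\<And>n. n \<ge> 1 \<Longrightarrow> P (Suc n) \<subseteq> P n"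
    and ext: "p extreme_point_of (\<Inter>n\<in>{1..}. P n)"
    and e: "e > 0"
  shows "\<exists>N. \<forall>n\<ge>N. \<exists>v. v extreme_point_of P n \<and> dist v p < e"
proof -
  define Q where "Q = (\<Inter>n\<in>{1..}. P n)"
  have pQ: "p \<in> Q" using ext unfolding Q_def extreme_point_of_def by blast
  have closedQ: "closed Q" unfolding Q_def using pol polytope_imp_closed by blast
  have QP1: "Q \<subseteq> P 1" unfolding Q_def by auto
  have bQ: "bounded Q" using QP1 pol[of 1] polytope_imp_bounded bounded_subset by blast
  have convQ: "convex Q" unfolding Q_def using pol polytope_imp_convex by (intro convex_INT) auto
  define C where "C = Q \<inter> {x. e \<le> dist p x}"
  have cC: "compact C" unfolding C_def
    using closedQ bQ by (simp add: compact_eq_bounded_closed closed_Int closed_Collect_le continuous_on_const continuous_on_dist continuous_on_id bounded_Int)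
  define K where "K = convex hull C"
  have cK: "closed K" unfolding K_def using cC compact_convex_hull compact_imp_closed by blast
  have pK: "p \<notin> K"
  proof
    assume "p \<in> K"
    have "K \<subseteq> Q" unfolding K_def C_def using convQ by (simp add: hull_minimal)
    then have "p extreme_point_of K" using ext \<open>p \<in> K\<close> unfolding Q_def extreme_point_of_def by blast
    then have "p \<in> C" unfolding K_def using extreme_point_of_convex_hull by blast
    then show False using e unfolding C_def by simp
  qed
  obtain a b where ab: "inner a p < b" "\<forall>x\<in>K. inner a x > b"
    using separating_hyperplane_closed_point[OF _ cK pK] unfolding K_def by auto
  define D where "D n = P (Suc n) \<inter> {x. inner a x \<le> b} \<inter> {x. e \<le> dist p x}" for n
  have "\<exists>N. D N = {}"
  proof (rule ccontr)
    assume "\<nexists>N. D N = {}"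
    then have ne: "\<And>n. D n \<noteq> {}" by blast
    have cD: "compact (D n)" for n
    proof -
      have "closed ({x. inner a x \<le> b} \<inter> {x. e \<le> dist p x})"
        by (intro closed_Int closed_halfspace_le) (simp add: closed_Collect_le continuous_on_const continuous_on_dist continuous_on_id)
      moreover have "compact (P (Suc n))" using pol[of "Suc n"] polytope_imp_compact by simp
      ultimately have "compact (P (Suc n) \<inter> ({x. inner a x \<le> b} \<inter> {x. e \<le> dist p x}))"
        by (rule compact_Int_closed[rotated])
      then show ?thesis unfolding D_def by (simp add: Int_assoc)
    qed
    have mono: "D n \<subseteq> D m" if "m \<le> n" for m n
      unfolding D_def using chain_sub[of P "Suc m" "Suc n", OF dec] that by auto
    have "\<Inter>(range D) \<noteq> {}" by (rule compact_nest[OF cD ne mono])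
    then obtain x where x: "x \<in> \<Inter>(range D)" by (meson ex_in_conv)
    have "x \<in> P m" if "m \<ge> 1" for m
    proof -
      have "x \<in> D (m - 1)" using x by blast
      then show ?thesis using that unfolding D_def by simp
    qed
    then have "x \<in> Q" unfolding Q_def by auto
    moreover have "e \<le> dist p x" "inner a x \<le> b" using x unfolding D_def by auto
    ultimately have "x \<in> K" unfolding K_def C_def by (simp add: hull_inc)
    then show False using ab \<open>inner a x \<le> b\<close> by force
  qed
  then obtain N where N: "D N = {}" by blast
  show ?thesis
  proof (rule exI[of _ "Suc N"], intro allI impI)
    fix n assume n: "Suc N \<le> n"
    have sub: "P n \<subseteq> P (Suc N)" using chain_sub[of P "Suc N" n, OF dec] n by auto
    have pPn: "p \<in> P n" using pQ n unfolding Q_def by auto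
    define E where "E = {x. x extreme_point_of P n}"
    have "P n = convex hull E" unfolding E_def
      using pol[of n] n by (intro Krein_Milman_Minkowski polytope_imp_compact polytope_imp_convex) auto
    then have pE: "p \<in> convex hull E" using pPn by simp
    have "\<exists>v\<in>E. inner a v \<le> inner a p"
    proof (rule ccontr)
      assume "\<not> ?thesis"
      then have "E \<subseteq> {x. inner a x > inner a p}" by auto
      then have "convex hull E \<subseteq> {x. inner a x > inner a p}"
        by (simp add: convex_halfspace_gt hull_minimal)
      then show False using pE by auto
    qed
    then obtain v where v: "v \<in> E" "inner a v \<le> inner a p" by blast
    have "v \<in> P n" using v unfolding E_def extreme_point_of_def by auto
    then have "v \<in> P (Suc N)" using sub by auto
    moreover have "inner a v \<le> b" using v ab by simp
    ultimately have "\<not> e \<le> dist p v" using N unfolding D_def by blast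
    then show "\<exists>v. v extreme_point_of P n \<and> dist v p < e"
      using v unfolding E_def by (auto simp: dist_commute)
  qed
qed

theorem lemma1:
  fixes P :: "nat \<Rightarrow> 'a::euclidean_space set" and p :: 'a
  assumes "\<And>n. n \<ge> 1 \<Longrightarrow> polytope (P n)"
    and "\<And>n. n \<ge> 1 \<Longrightarrow> P (Suc n) \<subseteq> P n"
    and "p extreme_point_of (\<Inter>n\<in>{1..}. P n)"
  shows "\<exists>q :: nat \<Rightarrow> 'a. (\<forall>n\<ge>1. q n extreme_point_of (P n)) \<and> q \<longlonglongrightarrow> p"
proof -
  define E where "E n = {x. x extreme_point_of P n}" for n
  have pP: "p \<in> P n" if "n \<ge> 1" for n
    using assms(3) that unfolding extreme_point_of_def by auto
  have fin: "finite (E n)" if "n \<ge> 1" for n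
    unfolding E_def using assms(1)[OF that] finite_polyhedron_extreme_points polytope_imp_polyhedron by blast
  have ne: "E n \<noteq> {}" if "n \<ge> 1" for n
  proof
    assume "E n = {}"
    then have "P n = {}" unfolding E_def
      using Krein_Milman_Minkowski[of "P n"] assms(1)[OF that] polytope_imp_compact polytope_imp_convex by fastforce
    then show False using pP[OF that] by simp
  qed
  define q where "q n = (SOME v. v \<in> E n \<and> (\<forall>w\<in>E n. dist v p \<le> dist w p))" for n
  have q: "q n \<in> E n \<and> (\<forall>w\<in>E n. dist (q n) p \<le> dist w p)" if n1: "n \<ge> 1" for n
  proof -
    obtain v where "v \<in> E n \<and> (\<forall>w\<in>E n. dist v p \<le> dist w p)"
      using exists_min_dist[OF fin[OF n1] ne[OF n1], of p] by blast
    then show ?thesis unfolding q_def by (rule someI)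
  qed
  show ?thesis
  proof (intro exI conjI allI impI)
    fix n :: nat assume "n \<ge> 1" then show "q n extreme_point_of P n" using q E_def by auto
  next
    show "q \<longlonglongrightarrow> p"
    proof (rule metric_LIMSEQ_I)
      fix r :: real assume r: "r > 0"
      obtain N where N: "\<forall>n\<ge>N. \<exists>v. v extreme_point_of P n \<and> dist v p < r"
        using key[OF assms r] by blast
      show "\<exists>no. \<forall>n\<ge>no. dist (q n) p < r"
      proof (rule exI[of _ "max N 1"], intro allI impI)
        fix n assume n: "max N 1 \<le> n"
        then obtain v where "v extreme_point_of P n" "dist v p < r" using N by auto
        then show "dist (q n) p < r" using q[of n] n unfolding E_def by force
      qed
    qed
  qed
qed

end
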